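(* Let $c:[0,\infty)\to[0,\infty)$ with $c(0)=0$ be such that $z(\phi)=c(\phi)/\phi$, $\phi>0$, is nonincreasing, and suppose $c$ induces an admissible transport cost $\tau$, i.e. $\tau(w)=\inf\{F^c[\psi]\mid\int_{\mathbb{R}}\psi\,dy=w\}$ for all $w\geq0$ with $\tau$ admissible. Then $$\int_0^1\sqrt{c(\phi)}\,d\phi<\infty,\qquad\text{which implies}\qquad\liminf_{\phi\searrow0}z(\phi)\phi^3=0.$$
   Context: A transport cost $\tau:[0,\infty)\to[0,\infty)$ is admissible if it is nondecreasing, concave and continuous with $\tau(0)=0$. For $c:[0,\infty)\to[0,\infty)$ and $\psi:\mathbb{R}\to\mathbb{R}$ (with locally integrable weak derivative; otherwise the energy is $+\infty$), $F^c[\psi]=\int_{\mathbb{R}}\frac12|\psi'(y)|^2+c(|\psi(y)|)\,dy$. *)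

theory Defs
  imports "HOL-Analysis.Analysis"
begin

definition test_fun :: "(real \<Rightarrow> real) \<Rightarrow> bool" where
  "test_fun \<phi> \<longleftrightarrow> (\<forall>n. (deriv ^^ n) \<phi> differentiable_on UNIV) \<and> bounded {y. \<phi> y \<noteq> 0}"

definition loc_integrable :: "(real \<Rightarrow> real) \<Rightarrow> bool" where
  "loc_integrable f \<longleftrightarrow> (\<forall>K. compact K \<longrightarrow> set_integrable lborel K f)"

definition weak_deriv :: "(real \<Rightarrow> real) \<Rightarrow> (real \<Rightarrow> real) \<Rightarrow> bool" where
  "weak_deriv \<psi> g \<longleftrightarrow> loc_integrable \<psi> \<and> loc_integrable g \<and>
     (\<forall>\<phi>. test_fun \<phi> \<longrightarrow>
        (\<integral>y. \<psi> y * deriv \<phi> y \<partial>lborel) = - (\<integral>y. g y * \<phi> y \<partial>lborel))"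

definition energy :: "(real \<Rightarrow> real) \<Rightarrow> (real \<Rightarrow> real) \<Rightarrow> ennreal" where
  "energy c \<psi> = (if \<exists>g. weak_deriv \<psi> g
     then (\<integral>\<^sup>+ y. ennreal (1/2 * (SOME g. weak_deriv \<psi> g) y ^ 2 + c \<bar>\<psi> y\<bar>) \<partial>lborel)
     else \<infinity>)"

definition admissible_cost :: "(real \<Rightarrow> real) \<Rightarrow> bool" where
  "admissible_cost \<tau> \<longleftrightarrow> (\<forall>w\<ge>0. \<tau> w \<ge> 0) \<and> mono_on {0..} \<tau> \<and> concave_on {0..} \<tau>
     \<and> continuous_on {0..} \<tau> \<and> \<tau> 0 = 0"

definition induced_cost :: "(real \<Rightarrow> real) \<Rightarrow> real \<Rightarrow> ennreal" where
  "induced_cost c w = (INF \<psi> \<in> {\<psi>. integrable lborel \<psi> \<and> (\<integral>y. \<psi> y \<partial>lborel) = w}. energy c \<psi>)"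

end

theory Submission
  imports Defs "HOL-Computational_Algebra.Polynomial"
begin

definition sm :: "(real \<Rightarrow> real) \<Rightarrow> bool" where
  "sm f \<longleftrightarrow> (\<forall>n. (deriv ^^ n) f differentiable_on UNIV)"

lemma sm_iff: "sm f \<longleftrightarrow> f differentiable_on UNIV \<and> sm (deriv f)"
proof
  assume "sm f"
  then show "f differentiable_on UNIV \<and> sm (deriv f)"
    unfolding sm_def by (metis funpow_0 funpow_Suc_right o_apply)
next
  assume a: "f differentiable_on UNIV \<and> sm (deriv f)"
  show "sm f" unfolding sm_def
  proof
    fix n show "(deriv ^^ n) f differentiable_on UNIV"
      using a unfolding sm_def by (cases n) (auto simp: funpow_Suc_right simp del: funpow.simps)
  qed
qed

lemma sm_coinduct:
  assumes step: "\<And>f. P f \<Longrightarrow> f differentiable_on UNIV \<and> P (deriv f)" and "P f"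
  shows "sm f"
proof -
  have "\<forall>f. P f \<longrightarrow> (deriv ^^ n) f differentiable_on UNIV" for n
  proof (induction n)
    case 0 then show ?case using step by auto
  next
    case (Suc n) then show ?case using step
      by (auto simp: funpow_Suc_right simp del: funpow.simps)
  qed
  then show ?thesis using assms(2) unfolding sm_def by blast
qed

lemma diff_on_UNIV_deriv:
  fixes f :: "real \<Rightarrow> real"
  assumes "f differentiable_on UNIV"
  shows "(f has_real_derivative deriv f x) (at x)"
  using assms by (simp add: differentiable_on_def DERIV_deriv_iff_real_differentiable)

lemma deriv_add_fun:
  fixes f g :: "real \<Rightarrow> real"
  assumes "f differentiable_on UNIV" "g differentiable_on UNIV"
  shows "deriv (\<lambda>x. f x + g x) = (\<lambda>x. deriv f x + deriv g x)"
proof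
  fix x show "deriv (\<lambda>x. f x + g x) x = deriv f x + deriv g x"
    by (intro DERIV_imp_deriv DERIV_add diff_on_UNIV_deriv[OF assms(1)] diff_on_UNIV_deriv[OF assms(2)])
qed

lemma sm_add: assumes "sm f" "sm g" shows "sm (\<lambda>x. f x + g x)"
proof (rule sm_coinduct[where P="\<lambda>h. \<exists>f g. sm f \<and> sm g \<and> h = (\<lambda>x. f x + g x)"])
  fix h assume "\<exists>f g. sm f \<and> sm g \<and> h = (\<lambda>x. f x + g x)"
  then obtain f g where fg: "sm f" "sm g" "h = (\<lambda>x. f x + g x)" by blast
  have d: "f differentiable_on UNIV" "g differentiable_on UNIV" "sm (deriv f)" "sm (deriv g)"
    using fg sm_iff by blast+
  show "h differentiable_on UNIV \<and> (\<exists>f g. sm f \<and> sm g \<and> deriv h = (\<lambda>x. f x + g x))"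
    using d fg(3) deriv_add_fun[OF d(1,2)]
    by (auto intro!: differentiable_on_add)
qed (use assms in blast)

lemma sm_cmult: assumes "sm f" shows "sm (\<lambda>x. c * f x)"
proof (rule sm_coinduct[where P="\<lambda>h. \<exists>f c. sm f \<and> h = (\<lambda>x. c * f x)"])
  fix h assume "\<exists>f c. sm f \<and> h = (\<lambda>x. c * f x)"
  then obtain f c where fg: "sm f" "h = (\<lambda>x. c * f x)" by blast
  have d: "f differentiable_on UNIV" "sm (deriv f)"
    using fg sm_iff by blast+
  have "deriv h = (\<lambda>x. c * deriv f x)"
    unfolding fg(2) by (rule ext, intro DERIV_imp_deriv DERIV_cmult diff_on_UNIV_deriv d)
  then show "h differentiable_on UNIV \<and> (\<exists>f c. sm f \<and> deriv h = (\<lambda>x. c * f x))"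
    using d fg by (auto intro!: differentiable_on_mult differentiable_on_const)
qed (use assms in blast)

lemma sm_diff: assumes "sm f" "sm g" shows "sm (\<lambda>x. f x - g x)"
  using sm_add[OF assms(1) sm_cmult[OF assms(2), of "-1"]] by simp

lemma sm_affine: assumes "sm f" shows "sm (\<lambda>x. f (a * x + b))"
proof (rule sm_coinduct[where P="\<lambda>h. \<exists>f c. sm f \<and> h = (\<lambda>x. c * f (a * x + b))"])
  fix h assume "\<exists>f c. sm f \<and> h = (\<lambda>x. c * f (a * x + b))"
  then obtain f c where fg: "sm f" "h = (\<lambda>x. c * f (a * x + b))" by blast
  have d: "f differentiable_on UNIV" "sm (deriv f)"
    using fg sm_iff by blast+
  have D: "(h has_real_derivative (c * a) * deriv f (a * x + b)) (at x)" for x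
  proof -
    have "((\<lambda>x. a * x + b) has_real_derivative a) (at x)"
      by (auto intro!: derivative_eq_intros)
    from DERIV_chain2[OF diff_on_UNIV_deriv[OF d(1)] this]
    have "((\<lambda>x. f (a * x + b)) has_real_derivative deriv f (a * x + b) * a) (at x)" .
    from DERIV_cmult[OF this, of c] show ?thesis unfolding fg(2) by (simp add: algebra_simps)
  qed
  have "deriv h = (\<lambda>x. (c * a) * deriv f (a * x + b))"
    by (rule ext, rule DERIV_imp_deriv, rule D)
  moreover have "h differentiable_on UNIV"
    using D by (meson differentiable_at_imp_differentiable_on real_differentiable_def)
  ultimately show "h differentiable_on UNIV \<and> (\<exists>f c. sm f \<and> deriv h = (\<lambda>x. c * f (a * x + b)))"
    using d by blast
next
  show "\<exists>g c. sm g \<and> (\<lambda>x. f (a * x + b)) = (\<lambda>x. c * g (a * x + b))"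
    using assms by (intro exI[of _ f] exI[of _ 1]) simp
qed

inductive alg :: "(real \<Rightarrow> real) \<Rightarrow> bool" where
  prod: "sm f \<Longrightarrow> sm g \<Longrightarrow> alg (\<lambda>x. f x * g x)"
| plus: "alg h \<Longrightarrow> alg k \<Longrightarrow> alg (\<lambda>x. h x + k x)"

lemma alg_deriv: "alg h \<Longrightarrow> \<exists>h'. alg h' \<and> (\<forall>x. (h has_real_derivative h' x) (at x))"
proof (induction rule: alg.induct)
  case (prod f g)
  have d: "f differentiable_on UNIV" "sm (deriv f)" "g differentiable_on UNIV" "sm (deriv g)"
    using prod sm_iff by blast+
  have "alg (\<lambda>x. (\<lambda>x. deriv f x * g x) x + (\<lambda>x. f x * deriv g x) x)"
    by (intro alg.intros d prod)
  moreover have "((\<lambda>x. f x * g x) has_real_derivative deriv f x * g x + f x * deriv g x) (at x)" for x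
    using DERIV_mult[OF diff_on_UNIV_deriv[OF d(1)] diff_on_UNIV_deriv[OF d(3)], of x] by (simp add: algebra_simps)
  ultimately show ?case by auto
next
  case (plus h k)
  then obtain h' k' where "alg h'" "alg k'" "\<forall>x. (h has_real_derivative h' x) (at x)"
      "\<forall>x. (k has_real_derivative k' x) (at x)" by blast
  then show ?case by (intro exI[of _ "\<lambda>x. h' x + k' x"]) (auto intro!: alg.intros derivative_intros)
qed

lemma alg_sm: "alg h \<Longrightarrow> sm h"
proof (rule sm_coinduct[where P=alg])
  fix h assume "alg h"
  from alg_deriv[OF this] obtain h' where h': "alg h'" "\<forall>x. (h has_real_derivative h' x) (at x)" by blast
  then have "deriv h = h'" by (intro ext DERIV_imp_deriv) auto
  moreover have "h differentiable_on UNIV"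
    using h' by (meson differentiable_at_imp_differentiable_on real_differentiable_def)
  ultimately show "h differentiable_on UNIV \<and> alg (deriv h)" using h' by simp
qed

lemma sm_mult: "sm f \<Longrightarrow> sm g \<Longrightarrow> sm (\<lambda>x. f x * g x)"
  by (rule alg_sm, rule alg.prod)

lemma poly_exp_lim: "((\<lambda>s. poly q s / exp s) \<longlongrightarrow> (0::real)) at_top"
proof -
  have "((\<lambda>s. (\<Sum>i\<le>degree q. coeff q i * (s ^ i / exp s))) \<longlongrightarrow> (\<Sum>i\<le>degree q. coeff q i * 0)) at_top"
    by (intro tendsto_sum tendsto_mult tendsto_const tendsto_power_div_exp_0)
  then show ?thesis by (simp add: poly_altdef sum_divide_distrib)
qed

definition fp :: "real poly \<Rightarrow> real \<Rightarrow> real" where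
  "fp p x = (if 0 < x then poly p (1/x) * exp (-1/x) else 0)"

definition qd :: "real poly \<Rightarrow> real poly" where
  "qd p = [:0,0,1:] * (p - pderiv p)"

lemma fp_deriv: "(fp p has_real_derivative fp (qd p) x) (at x)"
proof (cases "0 < x")
  case True
  have "((\<lambda>x. poly p (1/x) * exp (-1/x)) has_real_derivative
      poly (pderiv p) (1/x) * (- 1 / x^2) * exp (-1/x) + poly p (1/x) * (exp (-1/x) * (1/x^2))) (at x)"
    using True by (auto intro!: derivative_eq_intros DERIV_chain2[OF poly_DERIV] simp: power2_eq_square field_simps)
  moreover have "poly (pderiv p) (1/x) * (- 1 / x^2) * exp (-1/x) + poly p (1/x) * (exp (-1/x) * (1/x^2))
      = fp (qd p) x"
    using True by (simp add: fp_def qd_def power2_eq_square field_simps)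
  ultimately have "((\<lambda>x. poly p (1/x) * exp (-1/x)) has_real_derivative fp (qd p) x) (at x)" by simp
  then show ?thesis
    by (rule has_field_derivative_transform_within_open[where S="{0<..}"]) (use True in \<open>auto simp: fp_def\<close>)
next
  case False
  show ?thesis
  proof (cases "x < 0")
    case True
    have "((\<lambda>x. 0) has_real_derivative fp (qd p) x) (at x)" using True by (simp add: fp_def)
    then show ?thesis
      by (rule has_field_derivative_transform_within_open[where S="{..<0}"]) (use True in \<open>auto simp: fp_def\<close>)
  next
    case False
    with \<open>\<not> 0 < x\<close> have x0: "x = 0" by simp
    have L: "((\<lambda>y. (fp p y - fp p 0) / (y - 0)) \<longlongrightarrow> 0) (at_left 0)"
    proof (rule Lim_transform_eventually[OF tendsto_const])
      show "\<forall>\<^sub>F y in at_left 0. 0 = (fp p y - fp p 0) / (y - 0)"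
      proof -
        have "\<forall>\<^sub>F y in at_left (0::real). y \<in> {-1<..<0}" by (rule eventually_at_left_real) simp
        then show ?thesis by eventually_elim (auto simp: fp_def)
      qed
    qed
    have R: "((\<lambda>y. (fp p y - fp p 0) / (y - 0)) \<longlongrightarrow> 0) (at_right 0)"
      unfolding filterlim_at_right_to_top
    proof (rule Lim_transform_eventually[OF poly_exp_lim[of "pCons 0 p"]])
      show "\<forall>\<^sub>F s in at_top. poly (pCons 0 p) s / exp s = (fp p (inverse s) - fp p 0) / (inverse s - 0)"
        by (auto simp: eventually_at_top_dense fp_def exp_minus field_simps intro!: exI[of _ 0])
    qed
    have "(fp p has_real_derivative 0) (at 0)"
      unfolding has_field_derivative_iff using filterlim_at_split L R by blast
    then show ?thesis using x0 by (simp add: fp_def)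
  qed
qed

lemma sm_fp: "sm (fp p)"
proof (rule sm_coinduct[where P="\<lambda>h. \<exists>p. h = fp p"])
  fix h assume "\<exists>p. h = fp p"
  then obtain p where h: "h = fp p" by blast
  have "deriv h = fp (qd p)" unfolding h by (intro ext DERIV_imp_deriv fp_deriv)
  moreover have "h differentiable_on UNIV"
    unfolding h using fp_deriv
    by (meson differentiable_at_imp_differentiable_on real_differentiable_def)
  ultimately show "h differentiable_on UNIV \<and> (\<exists>p. deriv h = fp p)" by blast
qed blast

definition eta0 :: "real \<Rightarrow> real" where
  "eta0 x = fp 1 x * fp 1 (1 - x)"

lemma sm_eta0: "sm eta0"
proof -
  have "sm (\<lambda>x. fp 1 ((-1) * x + 1))" by (rule sm_affine[OF sm_fp])
  then show ?thesis unfolding eta0_def using sm_mult[OF sm_fp] by simp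
qed

lemma eta0_nonneg: "eta0 x \<ge> 0"
  by (simp add: eta0_def fp_def)

lemma eta0_zero: "x \<le> 0 \<or> 1 \<le> x \<Longrightarrow> eta0 x = 0"
  by (auto simp: eta0_def fp_def)

lemma eta0_lower: "1/4 \<le> x \<Longrightarrow> x \<le> 3/4 \<Longrightarrow> eta0 x \<ge> exp (-8)"
proof -
  assume x: "1/4 \<le> x" "x \<le> 3/4"
  have "exp (-4) \<le> exp (-1/x)" using x by (simp add: field_simps)
  moreover have "exp (-4) \<le> exp (-1/(1-x))" using x by (simp add: field_simps)
  ultimately have "exp (-4) * exp (-4) \<le> exp (-1/x) * exp (-1/(1-x))"
    by (intro mult_mono) auto
  then show ?thesis using x by (simp add: eta0_def fp_def mult_exp_exp)
qed

lemma eta0_cont: "continuous_on S eta0"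
  using sm_eta0 unfolding sm_iff[of eta0]
  by (meson differentiable_imp_continuous_on differentiable_on_subset subset_UNIV)

lemma eta0_int: "eta0 integrable_on {a..b}"
  by (rule integrable_continuous_interval[OF eta0_cont])

definition Z0 :: real where "Z0 = integral {0..1} eta0"

lemma Z0_pos: "Z0 > 0"
proof -
  have "integral {1/4..3/4::real} (\<lambda>x. exp (-8::real)) \<le> integral {1/4..3/4} eta0"
    by (intro integral_le eta0_int eta0_lower integrable_const_ivl) auto
  moreover have "integral {1/4..3/4} eta0 \<le> integral {0..1} eta0"
    by (rule integral_subset_le) (auto simp: eta0_int eta0_nonneg)
  moreover have "integral {1/4..3/4::real} (\<lambda>x. exp (-8::real)) > 0" by simp
  ultimately show ?thesis unfolding Z0_def by linarith
qed

definition eta :: "real \<Rightarrow> real" where "eta x = eta0 x / Z0"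

lemma sm_eta: "sm eta"
  using sm_cmult[OF sm_eta0, of "1/Z0"] unfolding eta_def by simp

lemma eta_cont: "continuous_on S eta"
  unfolding eta_def by (intro continuous_intros eta0_cont) (use Z0_pos in auto)

lemma eta_int: "eta integrable_on {a..b}"
  by (rule integrable_continuous_interval[OF eta_cont])

lemma eta_nonneg: "eta x \<ge> 0"
  using eta0_nonneg Z0_pos by (simp add: eta_def)

lemma eta_zero: "x \<le> 0 \<or> 1 \<le> x \<Longrightarrow> eta x = 0"
  by (simp add: eta_def eta0_zero)

lemma eta_int01: "integral {0..1} eta = 1"
  unfolding eta_def using Z0_pos by (simp add: Z0_def)

lemma eta_bounded: "\<exists>B>0. \<forall>x. \<bar>eta x\<bar> \<le> B"
proof -
  have "compact (eta ` {0..1})" by (intro compact_continuous_image eta_cont compact_Icc)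
  then obtain B where B: "B > 0" "\<forall>y\<in>eta ` {0..1}. norm y \<le> B"
    using compact_imp_bounded bounded_pos by metis
  have "\<bar>eta x\<bar> \<le> B" for x
  proof (cases "0 \<le> x \<and> x \<le> 1")
    case True then show ?thesis using B by auto
  next
    case False then show ?thesis using B eta_zero[of x] by auto
  qed
  then show ?thesis using B by blast
qed

lemma eta_lborel: "integrable lborel eta" "(\<integral>x. eta x \<partial>lborel) = 1"
proof -
  have si: "set_integrable lborel {0..1} eta" by (rule borel_integrable_atLeastAtMost'[OF eta_cont])
  have eq: "(\<lambda>x. indicator {0..1} x *\<^sub>R eta x) = eta"
  proof
    fix x show "indicator {0..1} x *\<^sub>R eta x = eta x"
      by (cases "0 \<le> x \<and> x \<le> 1") (auto simp: indicator_def eta_zero)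
  qed
  from si show "integrable lborel eta" unfolding set_integrable_def eq .
  have "(LINT x:{0..1}|lborel. eta x) = integral {0..1} eta"
    by (rule set_borel_integral_eq_integral(2)[OF si])
  then show "(\<integral>x. eta x \<partial>lborel) = 1" unfolding set_lebesgue_integral_def eq eta_int01 .
qed

definition H :: "real \<Rightarrow> real" where "H x = integral {-1..x} eta"

lemma H_zero: "x \<le> 0 \<Longrightarrow> H x = 0"
proof -
  assume x: "x \<le> 0"
  have "integral {-1..x} eta = integral {-1..x} (\<lambda>x. 0)"
    by (rule Henstock_Kurzweil_Integration.integral_cong) (use x in \<open>auto simp: eta_zero\<close>)
  then show ?thesis by (simp add: H_def)
qed

lemma H_split: "0 \<le> x \<Longrightarrow> H x = integral {0..x} eta"
proof -
  assume x: "0 \<le> x"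
  have "integral {-1..0} eta + integral {0..x} eta = integral {-1..x} eta"
    by (rule Henstock_Kurzweil_Integration.integral_combine) (use x eta_int in auto)
  moreover have "integral {-1..0} eta = 0" using H_zero[of 0] by (simp add: H_def)
  ultimately show ?thesis by (simp add: H_def)
qed

lemma H_one: "1 \<le> x \<Longrightarrow> H x = 1"
proof -
  assume x: "1 \<le> x"
  have "integral {0..1} eta + integral {1..x} eta = integral {0..x} eta"
    by (rule Henstock_Kurzweil_Integration.integral_combine) (use x eta_int in auto)
  moreover have "integral {1..x} eta = integral {1..x} (\<lambda>x. 0)"
    by (rule Henstock_Kurzweil_Integration.integral_cong) (auto simp: eta_zero)
  ultimately show ?thesis using H_split[of x] x eta_int01 by simp
qed

lemma H_bounds: "0 \<le> H x \<and> H x \<le> 1"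
proof (cases "x \<le> 0")
  case True then show ?thesis by (simp add: H_zero)
next
  case False
  show ?thesis
  proof (cases "1 \<le> x")
    case True then show ?thesis by (simp add: H_one)
  next
    case False
    have "integral {0..x} eta \<le> integral {0..1} eta"
      by (rule integral_subset_le) (use False eta_int eta_nonneg in auto)
    moreover have "0 \<le> integral {0..x} eta"
      by (intro Henstock_Kurzweil_Integration.integral_nonneg eta_int eta_nonneg)
    ultimately show ?thesis using H_split[of x] \<open>\<not> x \<le> 0\<close> eta_int01 by simp
  qed
qed

lemma H_deriv: "(H has_real_derivative eta x) (at x)"
proof (cases "x > -1")
  case True
  have "((\<lambda>x. integral {-1..x} eta) has_real_derivative eta x) (at x within {-1..x+1})"
    by (rule integral_has_real_derivative[OF eta_cont]) (use True in auto)
  moreover have "at x within {-1..x+1} = at x"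
    by (rule at_within_interior) (use True in auto)
  ultimately show ?thesis unfolding H_def by simp
next
  case False
  have "((\<lambda>x. 0) has_real_derivative eta x) (at x)" using False by (simp add: eta_zero)
  then show ?thesis
    by (rule has_field_derivative_transform_within_open[where S="{..<0}"])
       (use False in \<open>auto simp: H_zero\<close>)
qed

lemma sm_H: "sm H"
proof -
  have "deriv H = eta" by (intro ext DERIV_imp_deriv H_deriv)
  moreover have "H differentiable_on UNIV"
    using H_deriv by (meson differentiable_at_imp_differentiable_on real_differentiable_def)
  ultimately show ?thesis using sm_iff[of H] sm_eta by simp
qed

definition Pl :: "real \<Rightarrow> real \<Rightarrow> real \<Rightarrow> real \<Rightarrow> real" where
  "Pl a b h x = H ((x - a) / h) - H ((x - b) / h)"

lemma Pl_deriv: "h > 0 \<Longrightarrow> deriv (Pl a b h) x = eta ((x - a) / h) / h - eta ((x - b) / h) / h"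
proof -
  assume h: "h > 0"
  have "(Pl a b h has_real_derivative eta ((x - a) / h) * (1/h) - eta ((x - b) / h) * (1/h)) (at x)"
    unfolding Pl_def
    by (intro DERIV_diff DERIV_chain2[OF H_deriv]) (use h in \<open>auto intro!: derivative_eq_intros\<close>)
  then show ?thesis by (intro DERIV_imp_deriv) simp
qed

lemma Pl_test: assumes h: "h > 0" and ab: "a \<le> b" shows "test_fun (Pl a b h)"
proof -
  have "sm (\<lambda>x. H ((1/h) * x + (-a/h)) - H ((1/h) * x + (-b/h)))"
    by (intro sm_diff sm_affine sm_H)
  moreover have "(\<lambda>x. H ((1/h) * x + (-a/h)) - H ((1/h) * x + (-b/h))) = Pl a b h"
    unfolding Pl_def using h by (intro ext) (simp add: field_simps)
  ultimately have "sm (Pl a b h)" by simp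
  moreover have "{y. Pl a b h y \<noteq> 0} \<subseteq> {a..b+h}"
  proof
    fix y assume "y \<in> {y. Pl a b h y \<noteq> 0}"
    then have ne: "Pl a b h y \<noteq> 0" by simp
    show "y \<in> {a..b+h}"
    proof (rule ccontr)
      assume "y \<notin> {a..b+h}"
      then have "y < a \<or> y > b + h" by auto
      then show False
      proof
        assume "y < a"
        then have "(y - a)/h \<le> 0" "(y - b)/h \<le> 0" using h ab by (auto simp: divide_le_0_iff)
        then show False using ne by (simp add: Pl_def H_zero)
      next
        assume "y > b + h"
        then have "(y - a)/h \<ge> 1" "(y - b)/h \<ge> 1" using h ab by (auto simp: field_simps)
        then show False using ne by (simp add: Pl_def H_one)
      qed
    qed
  qed
  then have "bounded {y. Pl a b h y \<noteq> 0}" by (rule bounded_subset[OF bounded_closed_interval])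
  ultimately show ?thesis unfolding test_fun_def sm_def by blast
qed

lemma si_const: "set_integrable lborel {a..b::real} (\<lambda>y. c::real)"
  using borel_integrable_atLeastAtMost'[of a b "\<lambda>y. c"] by simp

lemma strong_leb:
  fixes f :: "real \<Rightarrow> real"
  assumes f: "\<And>a b. set_integrable lborel {a..b} f"
  obtains N where "negligible N"
    "\<And>x e. x \<notin> N \<Longrightarrow> 0 < e \<Longrightarrow> \<exists>d>0. \<forall>h. 0 < h \<and> h < d \<longrightarrow>
        integral {x..x+h} (\<lambda>y. \<bar>f y - f x\<bar>) / h < e"
proof -
  have fq: "set_integrable lborel {a..b} (\<lambda>y. \<bar>f y - q\<bar>)" for a b q
    by (intro set_integrable_abs set_integral_diff(1) f si_const)
  have fqi: "(\<lambda>y. \<bar>f y - q\<bar>) integrable_on {a..b}" for a b q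
    by (rule set_borel_integral_eq_integral(1)[OF fq])
  have "\<exists>N. negligible N \<and> (\<forall>x e. x \<notin> N \<and> 0 < e \<longrightarrow> (\<exists>d>0. \<forall>h. 0 < h \<and> h < d \<longrightarrow>
      \<bar>integral {x..x+h} (\<lambda>y. \<bar>f y - q\<bar>) / h - \<bar>f x - q\<bar>\<bar> < e))" for q
  proof -
    obtain N where N: "negligible N"
      "\<And>x e. \<lbrakk>x \<notin> N; 0 < e\<rbrakk> \<Longrightarrow> \<exists>d>0. \<forall>h. 0 < h \<and> h < d \<longrightarrow>
        norm(integral (cbox x (x + h *\<^sub>R One)) (\<lambda>y. \<bar>f y - q\<bar>) /\<^sub>R h ^ DIM(real) - \<bar>f x - q\<bar>) < e"
      using integrable_ccontinuous_explicit[of "\<lambda>y. \<bar>f y - q\<bar>"] fqi by (metis cbox_interval)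
    show ?thesis
      by (intro exI[of _ N] conjI N(1) allI impI) (use N(2) in \<open>auto simp: cbox_interval divide_inverse mult.commute\<close>)
  qed
  then obtain NQ where NQ: "\<And>q. negligible (NQ q)"
    "\<And>q x e. x \<notin> NQ q \<Longrightarrow> 0 < e \<Longrightarrow> \<exists>d>0. \<forall>h. 0 < h \<and> h < d \<longrightarrow>
      \<bar>integral {x..x+h} (\<lambda>y. \<bar>f y - q\<bar>) / h - \<bar>f x - q\<bar>\<bar> < e"
    by metis
  define N where "N = \<Union> (NQ ` \<rat>)"
  have "negligible N" unfolding N_def
    by (intro negligible_countable_Union countable_image countable_rat) (auto simp: NQ)
  moreover have "\<exists>d>0. \<forall>h. 0 < h \<and> h < d \<longrightarrow> integral {x..x+h} (\<lambda>y. \<bar>f y - f x\<bar>) / h < e"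
    if x: "x \<notin> N" and e: "0 < e" for x e
  proof -
    obtain q where q: "q \<in> \<rat>" "f x < q" "q < f x + e/3"
      using Rats_dense_in_real[of "f x" "f x + e/3"] e by auto
    have xq: "x \<notin> NQ q" using x q(1) by (auto simp: N_def)
    obtain d where d: "d > 0" "\<And>h. 0 < h \<Longrightarrow> h < d \<Longrightarrow>
        \<bar>integral {x..x+h} (\<lambda>y. \<bar>f y - q\<bar>) / h - \<bar>f x - q\<bar>\<bar> < e/3"
      using NQ(2)[OF xq, of "e/3"] e by auto
    have "integral {x..x+h} (\<lambda>y. \<bar>f y - f x\<bar>) / h < e" if h: "0 < h" "h < d" for h
    proof -
      have "integral {x..x+h} (\<lambda>y. \<bar>f y - f x\<bar>) \<le> integral {x..x+h} (\<lambda>y. \<bar>f y - q\<bar> + \<bar>q - f x\<bar>)"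
        by (rule integral_le) (auto intro!: fqi integrable_add integrable_const_ivl)
      also have "\<dots> = integral {x..x+h} (\<lambda>y. \<bar>f y - q\<bar>) + h * \<bar>q - f x\<bar>"
        using h by (subst integral_add) (auto intro!: fqi integrable_const_ivl)
      finally have "integral {x..x+h} (\<lambda>y. \<bar>f y - f x\<bar>) / h \<le>
          integral {x..x+h} (\<lambda>y. \<bar>f y - q\<bar>) / h + \<bar>q - f x\<bar>"
        using h by (simp add: field_simps)
      also have "\<dots> < e"
      proof -
        have "integral {x..x+h} (\<lambda>y. \<bar>f y - q\<bar>) / h - \<bar>f x - q\<bar> < e/3"
          using d(2)[OF h] by (simp only: abs_less_iff)
        then show ?thesis using q by linarith
      qed
      finally show ?thesis .
    qed
    then show ?thesis using d(1) by blast
  qed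
  ultimately show ?thesis using that by blast
qed

lemma eta_meas[measurable]: "eta \<in> borel_measurable borel"
  by (rule borel_measurable_continuous_onI[OF eta_cont])

lemma H_cont: "continuous_on S H"
  using sm_H unfolding sm_iff[of H]
  by (meson differentiable_imp_continuous_on differentiable_on_subset subset_UNIV)

lemma H_meas[measurable]: "H \<in> borel_measurable borel"
  by (rule borel_measurable_continuous_onI[OF H_cont])

definition EB :: real where "EB = (SOME B. B > 0 \<and> (\<forall>x. \<bar>eta x\<bar> \<le> B))"

lemma EB: "EB > 0" "\<bar>eta x\<bar> \<le> EB"
  using someI_ex[OF eta_bounded] unfolding EB_def by auto

lemma integrable_bdd_mult:
  fixes f g :: "'a \<Rightarrow> real"
  assumes "integrable M f" "g \<in> borel_measurable M" "\<And>x. \<bar>g x\<bar> \<le> B"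
  shows "integrable M (\<lambda>x. f x * g x)"
proof -
  have i: "integrable M (\<lambda>x. \<bar>B\<bar> * f x)" using assms(1) by simp
  show ?thesis
  proof (rule Bochner_Integration.integrable_bound[OF i])
  show "(\<lambda>x. f x * g x) \<in> borel_measurable M" using assms(1,2) by measurable
  show "AE x in M. norm (f x * g x) \<le> norm (\<bar>B\<bar> * f x)"
  proof (rule AE_I2)
    fix x
    have "\<bar>f x\<bar> * \<bar>g x\<bar> \<le> \<bar>f x\<bar> * \<bar>B\<bar>" using assms(3)[of x]
      by (intro mult_left_mono) auto
    then show "norm (f x * g x) \<le> norm (\<bar>B\<bar> * f x)" by (simp add: abs_mult mult.commute)
  qed
  qed
qed

lemma integrable_set: "integrable lborel f \<Longrightarrow> set_integrable lborel {a..b::real} (f::real\<Rightarrow>real)"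
  unfolding set_integrable_def by (rule integrable_mult_indicator) auto

definition kern :: "real \<Rightarrow> real \<Rightarrow> real \<Rightarrow> real" where
  "kern x h y = eta ((y - x) / h) / h"

lemma kern_meas[measurable]: "kern x h \<in> borel_measurable borel"
  unfolding kern_def by measurable

lemma kern_bound: "h > 0 \<Longrightarrow> \<bar>kern x h y\<bar> \<le> EB / h"
  using EB(2)[of "(y - x) / h"] by (simp add: kern_def divide_right_mono)

lemma kern_zero: "h > 0 \<Longrightarrow> y \<notin> {x..x+h} \<Longrightarrow> kern x h y = 0"
proof -
  assume h: "h > 0" and y: "y \<notin> {x..x+h}"
  then have "(y - x)/h \<le> 0 \<or> 1 \<le> (y - x)/h"
    by (auto simp: field_simps divide_le_0_iff)
  then show ?thesis by (simp add: kern_def eta_zero)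
qed

lemma kern_int: assumes h: "h > 0"
  shows "integrable lborel (kern x h)" "(\<integral>y. kern x h y \<partial>lborel) = 1"
proof -
  have e: "(\<lambda>t. kern x h (x + h * t)) = (\<lambda>t. eta t / h)"
    using h by (intro ext) (simp add: kern_def)
  have "integrable lborel (\<lambda>t. kern x h (x + h * t))"
    unfolding e using eta_lborel(1) by simp
  then show "integrable lborel (kern x h)"
    using lborel_integrable_real_affine_iff[of h "kern x h" x] h by simp
  have "(\<integral>y. kern x h y \<partial>lborel) = \<bar>h\<bar> *\<^sub>R (\<integral>t. kern x h (x + h * t) \<partial>lborel)"
    by (rule lborel_integral_real_affine) (use h in simp)
  also have "\<dots> = 1" unfolding e using h eta_lborel(2) by simp
  finally show "(\<integral>y. kern x h y \<partial>lborel) = 1" .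
qed

definition K :: "(real \<Rightarrow> real) \<Rightarrow> real \<Rightarrow> real \<Rightarrow> real" where
  "K f x h = (\<integral>y. f y * kern x h y \<partial>lborel)"

lemma K_integrable: "integrable lborel f \<Longrightarrow> h > 0 \<Longrightarrow> integrable lborel (\<lambda>y. f y * kern x h y)"
  by (rule integrable_bdd_mult[OF _ _ kern_bound]) auto

lemma kernel_est:
  assumes f: "integrable lborel f" and h: "h > 0"
  shows "\<bar>K f x h - f x\<bar> \<le> EB / h * integral {x..x+h} (\<lambda>y. \<bar>f y - f x\<bar>)"
proof -
  have fi: "integrable lborel (\<lambda>y. f y * kern x h y)" by (rule K_integrable[OF f h])
  have ci: "integrable lborel (\<lambda>y. f x * kern x h y)" using kern_int[OF h] by simp
  have "K f x h - f x = (\<integral>y. f y * kern x h y \<partial>lborel) - (\<integral>y. f x * kern x h y \<partial>lborel)"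
    using kern_int[OF h] by (simp add: K_def)
  also have "\<dots> = (\<integral>y. f y * kern x h y - f x * kern x h y \<partial>lborel)"
    by (rule Bochner_Integration.integral_diff[OF fi ci, symmetric])
  finally have eq: "K f x h - f x = (\<integral>y. f y * kern x h y - f x * kern x h y \<partial>lborel)" .
  have si: "set_integrable lborel {x..x+h} (\<lambda>y. \<bar>f y - f x\<bar>)"
    by (intro set_integrable_abs set_integral_diff(1) integrable_set f si_const)
  have di: "integrable lborel (\<lambda>y. f y * kern x h y - f x * kern x h y)" using fi ci by simp
  have "\<bar>K f x h - f x\<bar> \<le> (\<integral>y. \<bar>f y * kern x h y - f x * kern x h y\<bar> \<partial>lborel)"
    unfolding eq using integral_norm_bound[of lborel "\<lambda>y. f y * kern x h y - f x * kern x h y"] by simp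
  also have "\<dots> \<le> (\<integral>y. EB / h * (indicator {x..x+h} y *\<^sub>R \<bar>f y - f x\<bar>) \<partial>lborel)"
  proof (rule integral_mono)
    show "integrable lborel (\<lambda>y. \<bar>f y * kern x h y - f x * kern x h y\<bar>)" using di by simp
    show "integrable lborel (\<lambda>y. EB / h * (indicator {x..x+h} y *\<^sub>R \<bar>f y - f x\<bar>))"
      using si unfolding set_integrable_def by simp
    fix y
    show "\<bar>f y * kern x h y - f x * kern x h y\<bar> \<le> EB / h * (indicator {x..x+h} y *\<^sub>R \<bar>f y - f x\<bar>)"
    proof (cases "y \<in> {x..x+h}")
      case True
      have "\<bar>f y * kern x h y - f x * kern x h y\<bar> = \<bar>f y - f x\<bar> * \<bar>kern x h y\<bar>"
        by (simp add: abs_mult[symmetric] left_diff_distrib)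
      also have "\<dots> \<le> \<bar>f y - f x\<bar> * (EB / h)"
        by (intro mult_left_mono kern_bound h) auto
      finally show ?thesis using True by (simp add: mult.commute)
    next
      case False then show ?thesis using kern_zero[OF h False] by simp
    qed
  qed
  also have "\<dots> = EB / h * (LINT y:{x..x+h}|lborel. \<bar>f y - f x\<bar>)"
    unfolding set_lebesgue_integral_def by simp
  also have "\<dots> = EB / h * integral {x..x+h} (\<lambda>y. \<bar>f y - f x\<bar>)"
    using set_borel_integral_eq_integral(2)[OF si] by simp
  finally show ?thesis .
qed

lemma kernel_conv:
  assumes f: "integrable lborel f"
    and x: "\<And>e. 0 < e \<Longrightarrow> \<exists>d>0. \<forall>h. 0 < h \<and> h < d \<longrightarrow>
        integral {x..x+h} (\<lambda>y. \<bar>f y - f x\<bar>) / h < e"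
  shows "(\<lambda>n. K f x (1 / Suc n)) \<longlonglongrightarrow> f x"
proof (rule LIMSEQ_I)
  fix r :: real assume r: "0 < r"
  obtain d where d: "d > 0" "\<And>h. 0 < h \<Longrightarrow> h < d \<Longrightarrow> integral {x..x+h} (\<lambda>y. \<bar>f y - f x\<bar>) / h < r / EB"
    using x[of "r / EB"] r EB(1) by auto
  obtain no where no: "inverse (real (Suc no)) < d" using reals_Archimedean[OF d(1)] by blast
  have "norm (K f x (1 / Suc n) - f x) < r" if n: "n \<ge> no" for n
  proof -
    let ?h = "1 / real (Suc n)"
    have h: "?h > 0" by simp
    have "?h \<le> inverse (real (Suc no))" using n by (simp add: field_simps)
    then have hd: "?h < d" using no by linarith
    have "\<bar>K f x ?h - f x\<bar> \<le> EB / ?h * integral {x..x+?h} (\<lambda>y. \<bar>f y - f x\<bar>)"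
      by (rule kernel_est[OF f h])
    also have "\<dots> = EB * (integral {x..x+?h} (\<lambda>y. \<bar>f y - f x\<bar>) / ?h)" by simp
    also have "\<dots> < EB * (r / EB)"
      by (rule mult_strict_left_mono[OF d(2)[OF h hd] EB(1)])
    also have "\<dots> = r" using EB(1) by simp
    finally show ?thesis by simp
  qed
  then show "\<exists>no. \<forall>n\<ge>no. norm (K f x (1 / Suc n) - f x) < r" by blast
qed

lemma Pl_zero: assumes h: "h > 0" and ab: "a \<le> b" and y: "y \<notin> {a..b+h}"
  shows "Pl a b h y = 0"
proof -
  from y have "y < a \<or> y > b + h" by auto
  then show ?thesis
  proof
    assume "y < a"
    then have "(y - a)/h \<le> 0" "(y - b)/h \<le> 0" using h ab by (auto simp: divide_le_0_iff)
    then show ?thesis by (simp add: Pl_def H_zero)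
  next
    assume "y > b + h"
    then have "(y - a)/h \<ge> 1" "(y - b)/h \<ge> 1" using h ab by (auto simp: field_simps)
    then show ?thesis by (simp add: Pl_def H_one)
  qed
qed

lemma Pl_bound: "\<bar>Pl a b h y\<bar> \<le> 1"
  using H_bounds[of "(y - a) / h"] H_bounds[of "(y - b) / h"] by (simp add: Pl_def abs_le_iff)

lemma Pl_meas[measurable]: "Pl a b h \<in> borel_measurable borel"
  unfolding Pl_def by measurable

lemma ev_large:
  assumes "t > 0" shows "\<forall>\<^sub>F n in sequentially. 1 \<le> t * real (Suc n)"
proof -
  obtain N where N: "1 / t < real N" using reals_Archimedean2 by blast
  show ?thesis unfolding eventually_sequentially
  proof (intro exI allI impI)
    fix n assume "N \<le> n"
    then have "1 / t < real (Suc n)" using N by simp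
    then show "1 \<le> t * real (Suc n)" using assms by (simp add: field_simps)
  qed
qed

lemma Pl_lim: assumes ab: "a < b"
  shows "(\<lambda>n. Pl a b (1 / real (Suc n)) y) \<longlonglongrightarrow> indicator {a<..b} y"
proof (cases "y \<le> a")
  case True
  have "Pl a b (1 / real (Suc n)) y = 0" for n
  proof -
    have "(y - a) * real (Suc n) \<le> 0" "(y - b) * real (Suc n) \<le> 0" using True ab
      by (auto simp: mult_nonpos_nonneg)
    then show ?thesis by (simp add: Pl_def H_zero)
  qed
  then show ?thesis using True by simp
next
  case False
  show ?thesis
  proof (cases "y \<le> b")
    case True
    have ev: "\<forall>\<^sub>F n in sequentially. 1 \<le> (y - a) * real (Suc n)"
      using ev_large[of "y - a"] False by simp
    have "\<forall>\<^sub>F n in sequentially. Pl a b (1 / real (Suc n)) y = indicator {a<..b} y"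
      using ev
    proof (elim eventually_mono)
      fix n assume "1 \<le> (y - a) * real (Suc n)"
      moreover have "(y - b) * real (Suc n) \<le> 0" using True by (simp add: mult_nonpos_nonneg)
      ultimately show "Pl a b (1 / real (Suc n)) y = indicator {a<..b} y"
        using True False by (simp add: Pl_def H_zero H_one)
    qed
    then show ?thesis by (rule tendsto_eventually)
  next
    case False2: False
    have ev: "\<forall>\<^sub>F n in sequentially. 1 \<le> (y - a) * real (Suc n) \<and> 1 \<le> (y - b) * real (Suc n)"
      using eventually_conj[OF ev_large[of "y - a"] ev_large[of "y - b"]] False False2 by simp
    have "\<forall>\<^sub>F n in sequentially. Pl a b (1 / real (Suc n)) y = indicator {a<..b} y"
      using ev
    proof (elim eventually_mono)
      fix n assume "1 \<le> (y - a) * real (Suc n) \<and> 1 \<le> (y - b) * real (Suc n)"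
      then show "Pl a b (1 / real (Suc n)) y = indicator {a<..b} y"
        using False2 by (simp add: Pl_def H_one)
    qed
    then show ?thesis by (rule tendsto_eventually)
  qed
qed

lemma ftc_leb:
  assumes psi: "integrable lborel \<psi>" and wd: "weak_deriv \<psi> g"
    and La: "\<And>e. 0 < e \<Longrightarrow> \<exists>d>0. \<forall>h. 0 < h \<and> h < d \<longrightarrow>
        integral {a..a+h} (\<lambda>y. \<bar>\<psi> y - \<psi> a\<bar>) / h < e"
    and Lb: "\<And>e. 0 < e \<Longrightarrow> \<exists>d>0. \<forall>h. 0 < h \<and> h < d \<longrightarrow>
        integral {b..b+h} (\<lambda>y. \<bar>\<psi> y - \<psi> b\<bar>) / h < e"
    and ab: "a < b"
  shows "\<psi> b - \<psi> a = integral {a..b} g"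
proof -
  let ?h = "\<lambda>n. 1 / real (Suc n)"
  have gl: "loc_integrable g" and ident: "\<And>\<phi>. test_fun \<phi> \<Longrightarrow>
      (\<integral>y. \<psi> y * deriv \<phi> y \<partial>lborel) = - (\<integral>y. g y * \<phi> y \<partial>lborel)"
    using wd unfolding weak_deriv_def by auto
  have gi: "set_integrable lborel {a..b+1} g" and gi2: "set_integrable lborel {a..b} g"
    using gl unfolding loc_integrable_def by auto
  define G where "G = (\<lambda>y. indicator {a..b+1} y *\<^sub>R g y)"
  have Gi: "integrable lborel G" using gi unfolding set_integrable_def G_def .
  have Gm[measurable]: "G \<in> borel_measurable borel"
    using borel_measurable_integrable[OF Gi] by simp
  have eqn: "K \<psi> a (?h n) - K \<psi> b (?h n) = - (\<integral>y. G y * Pl a b (?h n) y \<partial>lborel)" for n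
  proof -
    have hp: "?h n > 0" by simp
    have "(\<integral>y. \<psi> y * deriv (Pl a b (?h n)) y \<partial>lborel) =
        (\<integral>y. \<psi> y * kern a (?h n) y - \<psi> y * kern b (?h n) y \<partial>lborel)"
      by (rule Bochner_Integration.integral_cong) (simp_all only: Pl_deriv[OF hp] kern_def right_diff_distrib)
    also have "\<dots> = K \<psi> a (?h n) - K \<psi> b (?h n)"
      unfolding K_def by (rule Bochner_Integration.integral_diff) (intro K_integrable psi hp)+
    finally have 1: "(\<integral>y. \<psi> y * deriv (Pl a b (?h n)) y \<partial>lborel) = K \<psi> a (?h n) - K \<psi> b (?h n)" .
    have 2: "(\<integral>y. g y * Pl a b (?h n) y \<partial>lborel) = (\<integral>y. G y * Pl a b (?h n) y \<partial>lborel)"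
    proof (rule Bochner_Integration.integral_cong)
      fix y
      show "g y * Pl a b (?h n) y = G y * Pl a b (?h n) y"
      proof (cases "y \<in> {a..b+1}")
        case True then show ?thesis by (simp add: G_def)
      next
        case False
        have h1: "1 / (1 + real n) \<le> 1" by simp
        from False have "y < a \<or> y > b + 1" by auto
        moreover have hb: "b + ?h n \<le> b + 1" by simp
        ultimately have "y < a \<or> y > b + ?h n" by (meson order.strict_trans1)
        then have yn: "y \<notin> {a..b + ?h n}" by auto
        show ?thesis using Pl_zero[OF hp _ yn] ab by simp
      qed
    qed simp
    show ?thesis using ident[OF Pl_test[OF hp]] ab 1 2 by simp
  qed
  have lim1: "(\<lambda>n. K \<psi> a (?h n) - K \<psi> b (?h n)) \<longlonglongrightarrow> \<psi> a - \<psi> b"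
    by (intro tendsto_diff kernel_conv psi La Lb)
  have lim2: "(\<lambda>n. \<integral>y. G y * Pl a b (?h n) y \<partial>lborel) \<longlonglongrightarrow> (\<integral>y. G y * indicator {a<..b} y \<partial>lborel)"
  proof (rule integral_dominated_convergence[where w="\<lambda>y. \<bar>G y\<bar>"])
    show "(\<lambda>y. G y * indicator {a<..b} y) \<in> borel_measurable lborel" by measurable
    show "(\<lambda>y. G y * Pl a b (?h n) y) \<in> borel_measurable lborel" for n by measurable
    show "integrable lborel (\<lambda>y. \<bar>G y\<bar>)" using Gi by simp
    show "AE y in lborel. (\<lambda>n. G y * Pl a b (?h n) y) \<longlonglongrightarrow> G y * indicator {a<..b} y"
      by (intro AE_I2 tendsto_mult tendsto_const Pl_lim ab)
    show "AE y in lborel. norm (G y * Pl a b (?h n) y) \<le> \<bar>G y\<bar>" for n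
    proof (rule AE_I2)
      fix y
      have "\<bar>G y\<bar> * \<bar>Pl a b (?h n) y\<bar> \<le> \<bar>G y\<bar> * 1" by (intro mult_left_mono Pl_bound) auto
      then show "norm (G y * Pl a b (?h n) y) \<le> \<bar>G y\<bar>" by (simp add: abs_mult)
    qed
  qed
  have "(\<integral>y. G y * indicator {a<..b} y \<partial>lborel) = (\<integral>y. indicator {a..b} y *\<^sub>R g y \<partial>lborel)"
  proof (rule integral_cong_AE)
    show "AE y in lborel. G y * indicator {a<..b} y = indicator {a..b} y *\<^sub>R g y"
      using AE_lborel_singleton[of a]
      by eventually_elim (auto simp: G_def indicator_def)
  qed (use Gm gi2 in \<open>auto simp: set_integrable_def\<close>)
  also have "\<dots> = integral {a..b} g"
    using set_borel_integral_eq_integral(2)[OF gi2] unfolding set_lebesgue_integral_def .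
  finally have "(\<lambda>n. K \<psi> a (?h n) - K \<psi> b (?h n)) \<longlonglongrightarrow> - integral {a..b} g"
    using lim2 eqn by (simp add: tendsto_minus_cancel_left[symmetric])
  from LIMSEQ_unique[OF lim1 this] show ?thesis by simp
qed

lemma negl_AE: "negligible N \<Longrightarrow> AE x in lborel. x \<notin> N"
proof -
  assume "negligible N"
  then have "N \<in> null_sets lebesgue" by (simp add: negligible_iff_null_sets)
  then have "AE x in lebesgue. x \<notin> N" by (rule AE_not_in)
  then show ?thesis by (simp add: AE_completion_iff)
qed

lemma crossing:
  fixes u :: "real \<Rightarrow> real"
  assumes cont: "continuous_on {p..q} u" and pq: "p \<le> q"
    and up: "\<bar>u p\<bar> \<ge> A" and uq: "\<bar>u q\<bar> \<le> B" and BA: "B < A"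
  obtains \<alpha> \<beta> where "p \<le> \<alpha>" "\<alpha> < \<beta>" "\<beta> \<le> q" "\<bar>u \<alpha>\<bar> \<ge> A" "\<bar>u \<beta>\<bar> \<le> B"
    "\<And>x. \<alpha> < x \<Longrightarrow> x < \<beta> \<Longrightarrow> B < \<bar>u x\<bar> \<and> \<bar>u x\<bar> < A"
proof -
  let ?v = "\<lambda>x. \<bar>u x\<bar>"
  have vc: "continuous_on {p..q} ?v" by (intro continuous_intros cont)
  define S1 where "S1 = {p..q} \<inter> ?v -` {..B}"
  have S1c: "closed S1" unfolding S1_def by (intro continuous_closed_preimage vc) auto
  have qS1: "q \<in> S1" using uq pq by (auto simp: S1_def)
  have S1b: "bdd_below S1" unfolding S1_def by (auto intro: bdd_belowI[of _ p])
  define \<beta> where "\<beta> = Inf S1"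
  have bS1: "\<beta> \<in> S1" unfolding \<beta>_def using closed_contains_Inf[OF _ S1b S1c] qS1 by auto
  have bq: "\<beta> \<le> q" unfolding \<beta>_def by (rule cInf_lower[OF qS1 S1b])
  have bp: "p \<le> \<beta>" using bS1 by (auto simp: S1_def)
  have vb: "?v \<beta> \<le> B" using bS1 by (auto simp: S1_def)
  have below: "B < ?v x" if "p \<le> x" "x < \<beta>" for x
  proof (rule ccontr)
    assume "\<not> B < ?v x"
    then have "x \<in> S1" using that bq by (auto simp: S1_def)
    then have "\<beta> \<le> x" unfolding \<beta>_def by (rule cInf_lower[OF _ S1b])
    then show False using that by simp
  qed
  define S2 where "S2 = {p..\<beta>} \<inter> ?v -` {A..}"
  have vc2: "continuous_on {p..\<beta>} ?v" by (rule continuous_on_subset[OF vc]) (use bq in auto)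
  have S2c: "closed S2" unfolding S2_def by (intro continuous_closed_preimage vc2) auto
  have pS2: "p \<in> S2" using up bp by (auto simp: S2_def)
  have S2b: "bdd_above S2" unfolding S2_def by (auto intro: bdd_aboveI[of _ \<beta>])
  define \<alpha> where "\<alpha> = Sup S2"
  have aS2: "\<alpha> \<in> S2" unfolding \<alpha>_def using closed_contains_Sup[OF _ S2b S2c] pS2 by auto
  have ap: "p \<le> \<alpha>" unfolding \<alpha>_def by (rule cSup_upper[OF pS2 S2b])
  have va: "?v \<alpha> \<ge> A" using aS2 by (auto simp: S2_def)
  have ab: "\<alpha> < \<beta>"
  proof -
    have "\<alpha> \<le> \<beta>" using aS2 by (auto simp: S2_def)
    moreover have "\<alpha> \<noteq> \<beta>" using va vb BA by auto
    ultimately show ?thesis by simp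
  qed
  have above: "?v x < A" if "\<alpha> < x" "x \<le> \<beta>" for x
  proof (rule ccontr)
    assume "\<not> ?v x < A"
    then have "x \<in> S2" using that ap by (auto simp: S2_def)
    then have "x \<le> \<alpha>" unfolding \<alpha>_def by (rule cSup_upper[OF _ S2b])
    then show False using that by simp
  qed
  show ?thesis
    by (rule that[OF ap ab bq va vb]) (use below above ap in auto)
qed

lemma band_core:
  fixes c \<psi> g :: "real \<Rightarrow> real"
  assumes c_nonneg: "\<forall>x\<ge>0. c x \<ge> 0"
    and z_noninc: "\<forall>x y. 0 < x \<longrightarrow> x \<le> y \<longrightarrow> c y / y \<le> c x / x"
    and psi: "integrable lborel \<psi>" and int1: "(\<integral>y. \<psi> y \<partial>lborel) = 1"
    and wd: "weak_deriv \<psi> g"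
    and E: "(\<integral>\<^sup>+ y. ennreal (1/2 * g y ^ 2 + c \<bar>\<psi> y\<bar>) \<partial>lborel) = ennreal EE"
    and EE: "EE \<ge> 0"
  shows "\<exists>m>0. \<forall>N0. (\<Sum>k<N0. m / 2^(Suc k) * sqrt (c (m / 2^k))) \<le> EE"
proof -
  have psi_loc: "\<And>a b. set_integrable lborel {a..b} \<psi>" using integrable_set[OF psi] .
  obtain N where N: "negligible N" and Nl: "\<And>x e. x \<notin> N \<Longrightarrow> 0 < e \<Longrightarrow> \<exists>d>0. \<forall>h. 0 < h \<and> h < d \<longrightarrow>
        integral {x..x+h} (\<lambda>y. \<bar>\<psi> y - \<psi> x\<bar>) / h < e"
    using strong_leb[OF psi_loc] by blast
  have AEN: "AE x in lborel. x \<notin> N" by (rule negl_AE[OF N])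
  have g_si: "\<And>a b. set_integrable lborel {a..b} g"
    using wd unfolding weak_deriv_def loc_integrable_def by auto
  have g_int: "\<And>a b. g integrable_on {a..b}" using set_borel_integral_eq_integral(1)[OF g_si] .
  have psim: "\<psi> \<in> borel_measurable lborel" using psi by (rule borel_measurable_integrable)
  obtain y0 where y0: "y0 \<notin> N" "\<psi> y0 \<noteq> 0"
  proof (rule ccontr)
    assume "\<not> thesis"
    with that have z: "\<And>y. y \<notin> N \<Longrightarrow> \<psi> y = 0" by blast
    have "(\<integral>y. \<psi> y \<partial>lborel) = (\<integral>y. (0::real) \<partial>(lborel::real measure))"
    proof (rule Bochner_Integration.integral_cong_AE)
      show "AE y in lborel. \<psi> y = 0" using AEN by eventually_elim (use z in auto)
    qed (use psim in auto)
    then show False using int1 by simp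
  qed
  define m where "m = \<bar>\<psi> y0\<bar>"
  have m: "m > 0" using y0 by (simp add: m_def)
  define s where "s k = m / 2^k" for k :: nat
  have s_pos: "s k > 0" for k using m by (simp add: s_def)
  have s_Suc: "s (Suc k) = s k / 2" for k by (simp add: s_def)
  have s_mono: "j \<le> k \<Longrightarrow> s k \<le> s j" for j k
    unfolding s_def using m by (intro divide_left_mono power_increasing) auto
  have s_le_m: "s k \<le> m" for k using s_mono[of 0 k] by (simp add: s_def)
  define \<psi>t where "\<psi>t x = \<psi> y0 + integral {y0..x} g" for x
  have eqt: "\<psi> x = \<psi>t x" if "x \<notin> N" "y0 \<le> x" for x
  proof (cases "x = y0")
    case True then show ?thesis by (simp add: \<psi>t_def)
  next
    case False
    then have "y0 < x" using that by simp
    from ftc_leb[OF psi wd Nl[OF y0(1)] Nl[OF that(1)] this] show ?thesis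
      by (simp add: \<psi>t_def)
  qed
  have contt: "continuous_on {y0..b} \<psi>t" for b
    unfolding \<psi>t_def by (intro continuous_intros indefinite_integral_continuous_1 g_int)
  have \<psi>t0: "\<psi>t y0 = \<psi> y0" by (simp add: \<psi>t_def)
  have diff_t: "\<psi>t b - \<psi>t a = integral {a..b} g" if "y0 \<le> a" "a \<le> b" for a b
  proof -
    have "integral {y0..a} g + integral {a..b} g = integral {y0..b} g"
      by (rule Henstock_Kurzweil_Integration.integral_combine) (use that g_int in auto)
    then show ?thesis by (simp add: \<psi>t_def)
  qed
  show ?thesis
  proof (intro exI[of _ m] conjI allI m)
    fix N0 :: nat
    obtain y1 where y1: "y1 > y0" "y1 \<notin> N" "\<bar>\<psi> y1\<bar> < s N0"
    proof (rule ccontr)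
      assume "\<not> thesis"
      with that have big: "\<And>y. y > y0 \<Longrightarrow> y \<notin> N \<Longrightarrow> s N0 \<le> \<bar>\<psi> y\<bar>" by force
      define \<epsilon> where "\<epsilon> = s N0"
      have ep: "\<epsilon> > 0" by (simp add: \<epsilon>_def s_pos)
      define R where "R = ((\<integral>y. \<bar>\<psi> y\<bar> \<partial>lborel) + 1) / \<epsilon>"
      have R0: "R \<ge> 0" unfolding R_def using ep by (simp add: integral_nonneg_AE)
      have "(\<integral>y. \<epsilon> * indicator {y0<..y0+R} y \<partial>lborel) \<le> (\<integral>y. \<bar>\<psi> y\<bar> \<partial>lborel)"
      proof (rule integral_mono_AE)
        show "integrable lborel (\<lambda>y. \<epsilon> * indicator {y0<..y0+R} y)" using R0 by (auto intro!: integrable_real_indicator)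
        show "integrable lborel (\<lambda>y. \<bar>\<psi> y\<bar>)" using psi by simp
        show "AE y in lborel. \<epsilon> * indicator {y0<..y0+R} y \<le> \<bar>\<psi> y\<bar>"
          using AEN by eventually_elim (use big in \<open>auto simp: indicator_def \<epsilon>_def\<close>)
      qed
      with R0  have "\<epsilon> * R \<le> (\<integral>y. \<bar>\<psi> y\<bar> \<partial>lborel)" by simp
      then show False using ep by (simp add: R_def)
    qed
    have \<psi>t1: "\<psi>t y1 = \<psi> y1" using eqt[of y1] y1 by simp
    have "\<forall>k. k < N0 \<longrightarrow> (\<exists>ab. y0 \<le> fst ab \<and> fst ab < snd ab \<and> snd ab \<le> y1 \<and>
        s k \<le> \<bar>\<psi>t (fst ab)\<bar> \<and> \<bar>\<psi>t (snd ab)\<bar> \<le> s (Suc k) \<and>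
        (\<forall>x. fst ab < x \<longrightarrow> x < snd ab \<longrightarrow> s (Suc k) < \<bar>\<psi>t x\<bar> \<and> \<bar>\<psi>t x\<bar> < s k))"
    proof (intro allI impI)
      fix k assume k: "k < N0"
      have A: "s k \<le> \<bar>\<psi>t y0\<bar>" using s_le_m[of k] by (simp add: \<psi>t0 m_def)
      have B: "\<bar>\<psi>t y1\<bar> \<le> s (Suc k)" using y1(3) s_mono[of "Suc k" N0] k \<psi>t1 by simp
      have BA: "s (Suc k) < s k" using s_pos[of k] by (simp add: s_Suc)
      obtain \<alpha> \<beta> where "y0 \<le> \<alpha>" "\<alpha> < \<beta>" "\<beta> \<le> y1" "s k \<le> \<bar>\<psi>t \<alpha>\<bar>" "\<bar>\<psi>t \<beta>\<bar> \<le> s (Suc k)"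
        "\<And>x. \<alpha> < x \<Longrightarrow> x < \<beta> \<Longrightarrow> s (Suc k) < \<bar>\<psi>t x\<bar> \<and> \<bar>\<psi>t x\<bar> < s k"
        using crossing[OF contt[of y1] _ A B BA] y1(1) by auto
      then show "\<exists>ab. y0 \<le> fst ab \<and> fst ab < snd ab \<and> snd ab \<le> y1 \<and>
        s k \<le> \<bar>\<psi>t (fst ab)\<bar> \<and> \<bar>\<psi>t (snd ab)\<bar> \<le> s (Suc k) \<and>
        (\<forall>x. fst ab < x \<longrightarrow> x < snd ab \<longrightarrow> s (Suc k) < \<bar>\<psi>t x\<bar> \<and> \<bar>\<psi>t x\<bar> < s k)"
        by (intro exI[of _ "(\<alpha>, \<beta>)"]) auto
    qed
    then obtain AB where AB: "\<And>k. k < N0 \<Longrightarrow> y0 \<le> fst (AB k) \<and> fst (AB k) < snd (AB k) \<and> snd (AB k) \<le> y1 \<and>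
        s k \<le> \<bar>\<psi>t (fst (AB k))\<bar> \<and> \<bar>\<psi>t (snd (AB k))\<bar> \<le> s (Suc k) \<and>
        (\<forall>x. fst (AB k) < x \<longrightarrow> x < snd (AB k) \<longrightarrow> s (Suc k) < \<bar>\<psi>t x\<bar> \<and> \<bar>\<psi>t x\<bar> < s k)"
      by metis
    define \<alpha> where "\<alpha> k = fst (AB k)" for k
    define \<beta> where "\<beta> k = snd (AB k)" for k
    define I where "I k = {\<alpha> k<..<\<beta> k}" for k
    define G where "G x = indicator {y0..y1} x * g x" for x
    have Gm[measurable]: "G \<in> borel_measurable lborel"
      using g_si[of y0 y1] unfolding set_integrable_def G_def
      by (simp add: mult.commute borel_measurable_integrable)
    define sc where "sc k = sqrt (c (s k))" for k
    have sc_nn: "sc k \<ge> 0" for k using c_nonneg s_pos[of k] by (simp add: sc_def)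
    have Isub: "k < N0 \<Longrightarrow> x \<in> I k \<Longrightarrow> y0 \<le> x \<and> x \<le> y1" for k x
      using AB[of k] by (auto simp: I_def \<alpha>_def \<beta>_def)
    have Ival: "k < N0 \<Longrightarrow> x \<in> I k \<Longrightarrow> s (Suc k) < \<bar>\<psi>t x\<bar> \<and> \<bar>\<psi>t x\<bar> < s k" for k x
      using AB[of k] by (auto simp: I_def \<alpha>_def \<beta>_def)
    have Idisj: "k < N0 \<Longrightarrow> j < N0 \<Longrightarrow> x \<in> I k \<Longrightarrow> x \<in> I j \<Longrightarrow> k = j" for k j x
    proof (rule ccontr)
      assume kj: "k < N0" "j < N0" "x \<in> I k" "x \<in> I j" "k \<noteq> j"
      show False
      proof (cases "k < j")
        case True
        have "s j \<le> s (Suc k)" using True by (intro s_mono) simp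
        then show False using Ival[OF kj(1,3)] Ival[OF kj(2,4)] by simp
      next
        case False
        then have "j < k" using kj by simp
        then have "s k \<le> s (Suc j)" by (intro s_mono) simp
        then show False using Ival[OF kj(1,3)] Ival[OF kj(2,4)] by simp
      qed
    qed
    have band: "ennreal (s (Suc k) * sc k) \<le> (\<integral>\<^sup>+x. indicator (I k) x * ennreal (sc k * \<bar>G x\<bar>) \<partial>lborel)"
      if k: "k < N0" for k
    proof -
      have ab: "y0 \<le> \<alpha> k" "\<alpha> k < \<beta> k" "\<beta> k \<le> y1" "s k \<le> \<bar>\<psi>t (\<alpha> k)\<bar>" "\<bar>\<psi>t (\<beta> k)\<bar> \<le> s (Suc k)"
        using AB[OF k] by (auto simp: \<alpha>_def \<beta>_def)
      have gsi: "set_integrable lborel {\<alpha> k..\<beta> k} (\<lambda>x. sc k * \<bar>g x\<bar>)"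
        by (intro set_integrable_abs set_integrable_mult_right g_si)
      have "s (Suc k) \<le> \<bar>\<psi>t (\<beta> k) - \<psi>t (\<alpha> k)\<bar>" using ab s_Suc[of k] by simp
      also have "\<dots> = \<bar>integral {\<alpha> k..\<beta> k} g\<bar>" using diff_t[of "\<alpha> k" "\<beta> k"] ab by simp
      also have "\<dots> \<le> integral {\<alpha> k..\<beta> k} (\<lambda>x. \<bar>g x\<bar>)"
      proof -
        have "norm (integral {\<alpha> k..\<beta> k} g) \<le> integral {\<alpha> k..\<beta> k} (\<lambda>x. \<bar>g x\<bar>)"
          by (rule integral_norm_bound_integral)
             (auto intro: g_int set_borel_integral_eq_integral(1)[OF set_integrable_abs[OF g_si]])
        then show ?thesis by simp
      qed
      finally have 1: "s (Suc k) * sc k \<le> integral {\<alpha> k..\<beta> k} (\<lambda>x. sc k * \<bar>g x\<bar>)"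
        using sc_nn[of k] by (simp add: mult.commute mult_left_mono)
      have "integral {\<alpha> k..\<beta> k} (\<lambda>x. sc k * \<bar>g x\<bar>) = (\<integral>x. indicator {\<alpha> k..\<beta> k} x * (sc k * \<bar>g x\<bar>) \<partial>lborel)"
        using set_borel_integral_eq_integral(2)[OF gsi] unfolding set_lebesgue_integral_def by simp
      also have "ennreal \<dots> = (\<integral>\<^sup>+x. ennreal (indicator {\<alpha> k..\<beta> k} x * (sc k * \<bar>g x\<bar>)) \<partial>lborel)"
        by (rule nn_integral_eq_integral[symmetric])
           (use gsi sc_nn in \<open>auto simp: set_integrable_def mult.commute\<close>)
      also have "\<dots> = (\<integral>\<^sup>+x. indicator (I k) x * ennreal (sc k * \<bar>G x\<bar>) \<partial>lborel)"
      proof (rule nn_integral_cong_AE)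
        show "AE x in lborel. ennreal (indicator {\<alpha> k..\<beta> k} x * (sc k * \<bar>g x\<bar>)) =
            indicator (I k) x * ennreal (sc k * \<bar>G x\<bar>)"
          using AE_lborel_singleton[of "\<alpha> k"] AE_lborel_singleton[of "\<beta> k"]
        proof eventually_elim
          case (elim x)
          show ?case
          proof (cases "x \<in> I k")
            case True
            then have "x \<in> {y0..y1}" using Isub[OF k True] by simp
            then show ?thesis using True by (auto simp: I_def G_def indicator_def)
          next
            case False
            then show ?thesis using elim by (auto simp: I_def indicator_def)
          qed
        qed
      qed
      finally have 2: "ennreal (sc k * integral {\<alpha> k..\<beta> k} (\<lambda>x. \<bar>g x\<bar>)) =
          (\<integral>\<^sup>+x. indicator (I k) x * ennreal (sc k * \<bar>G x\<bar>) \<partial>lborel)" by simp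
      have "ennreal (s (Suc k) * sc k) \<le> ennreal (sc k * integral {\<alpha> k..\<beta> k} (\<lambda>x. \<bar>g x\<bar>))"
        using 1 by (simp add: ennreal_leI)
      then show ?thesis using 2 by simp
    qed
    have pw: "AE x in lborel. (\<Sum>k<N0. indicator (I k) x * ennreal (sc k * \<bar>G x\<bar>)) \<le>
        ennreal (1/2 * g x ^ 2 + c \<bar>\<psi> x\<bar>)"
      using AEN
    proof eventually_elim
      case (elim x)
      show ?case
      proof (cases "\<exists>k<N0. x \<in> I k")
        case True
        then obtain k where k: "k < N0" "x \<in> I k" by blast
        have others: "(\<Sum>j\<in>{..<N0} - {k}. indicator (I j) x * ennreal (sc j * \<bar>G x\<bar>)) = 0"
          by (rule sum.neutral) (use Idisj[OF k(1) _ k(2)] in \<open>auto simp: indicator_def\<close>)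
        have sumeq: "(\<Sum>j<N0. indicator (I j) x * ennreal (sc j * \<bar>G x\<bar>)) = ennreal (sc k * \<bar>G x\<bar>)"
          using sum.remove[of "{..<N0}" k "\<lambda>j. indicator (I j) x * ennreal (sc j * \<bar>G x\<bar>)"] k others
          by simp
        have xr: "y0 \<le> x" "x \<le> y1" using Isub[OF k] by auto
        have Gx: "G x = g x" using xr by (simp add: G_def)
        have px: "\<psi> x = \<psi>t x" using eqt[OF elim xr(1)] .
        define t where "t = \<bar>\<psi>t x\<bar>"
        have t: "s (Suc k) < t" "t < s k" using Ival[OF k] by (auto simp: t_def)
        have tpos: "t > 0" using t s_pos[of "Suc k"] by simp
        have ck: "c (s k) \<ge> 0" using c_nonneg s_pos[of k] by simp
        have "c (s k) / s k \<le> c t / t" using z_noninc tpos t by auto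
        then have "t * (c (s k) / s k) \<le> c t" using tpos by (simp add: field_simps)
        moreover have "s (Suc k) * (c (s k) / s k) \<le> t * (c (s k) / s k)"
          using t ck s_pos[of k] by (intro mult_right_mono) auto
        moreover have "s (Suc k) * (c (s k) / s k) = c (s k) / 2"
          using s_pos[of k] by (simp add: s_Suc)
        ultimately have ct: "c (s k) / 2 \<le> c t" by linarith
        have sq: "sc k ^ 2 = c (s k)" using ck by (simp add: sc_def)
        have "0 \<le> (\<bar>g x\<bar> - sc k) ^ 2" by simp
        then have "sc k * \<bar>g x\<bar> \<le> 1/2 * g x ^ 2 + c (s k) / 2"
          using sq by (simp add: power2_eq_square algebra_simps)
        also have "\<dots> \<le> 1/2 * g x ^ 2 + c \<bar>\<psi> x\<bar>" using ct px by (simp add: t_def)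
        finally have fin: "sc k * \<bar>g x\<bar> \<le> 1/2 * g x ^ 2 + c \<bar>\<psi> x\<bar>" .
        have "ennreal (sc k * \<bar>G x\<bar>) \<le> ennreal (1/2 * g x ^ 2 + c \<bar>\<psi> x\<bar>)"
          using fin Gx by (simp add: ennreal_leI)
        then show ?thesis by (simp only: sumeq)
      next
        case False
        then have "(\<Sum>j<N0. indicator (I j) x * ennreal (sc j * \<bar>G x\<bar>)) = 0"
          by (intro sum.neutral) (auto simp: indicator_def)
        then show ?thesis by simp
      qed
    qed
    have "ennreal (\<Sum>k<N0. s (Suc k) * sc k) = (\<Sum>k<N0. ennreal (s (Suc k) * sc k))"
      using s_pos sc_nn by (intro sum_ennreal[symmetric]) (simp add: less_imp_le)
    also have "\<dots> \<le> (\<Sum>k<N0. \<integral>\<^sup>+x. indicator (I k) x * ennreal (sc k * \<bar>G x\<bar>) \<partial>lborel)"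
      by (intro sum_mono band) simp
    also have "\<dots> = (\<integral>\<^sup>+x. (\<Sum>k<N0. indicator (I k) x * ennreal (sc k * \<bar>G x\<bar>)) \<partial>lborel)"
      by (rule nn_integral_sum[symmetric]) (simp add: I_def)
    also have "\<dots> \<le> (\<integral>\<^sup>+ y. ennreal (1/2 * g y ^ 2 + c \<bar>\<psi> y\<bar>) \<partial>lborel)"
      by (rule nn_integral_mono_AE[OF pw])
    also have "\<dots> = ennreal EE" by (rule E)
    finally have "(\<Sum>k<N0. s (Suc k) * sc k) \<le> EE" using EE by simp
    then show "(\<Sum>k<N0. m / 2^(Suc k) * sqrt (c (m / 2^k))) \<le> EE"
      by (simp add: s_def sc_def)
  qed
qed

lemma c_final:
  fixes c :: "real \<Rightarrow> real"
  assumes c_nonneg: "\<forall>x\<ge>0. c x \<ge> 0"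
    and c0: "c 0 = 0"
    and z_noninc: "\<forall>x y. 0 < x \<longrightarrow> x \<le> y \<longrightarrow> c y / y \<le> c x / x"
    and m: "m > 0"
    and bound: "\<forall>N0. (\<Sum>k<N0. m / 2^(Suc k) * sqrt (c (m / 2^k))) \<le> C"
  shows "(\<integral>\<^sup>+ \<phi> \<in> {0..1}. ennreal (sqrt (c \<phi>)) \<partial>lborel) < \<infinity> \<and>
         Liminf (at_right 0) (\<lambda>\<phi>. ereal (c \<phi> / \<phi> * \<phi> ^ 3)) = 0"
proof -
  define s where "s k = m / 2^k" for k :: nat
  have s_pos: "s k > 0" for k using m by (simp add: s_def)
  have s_Suc: "s (Suc k) = s k / 2" for k by (simp add: s_def)
  have s_le_m: "s k \<le> m" for k
  proof -
    have "m / 2^k \<le> m / 1" by (rule divide_left_mono) (use m in auto)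
    then show ?thesis by (simp add: s_def)
  qed
  define a where "a k = s (Suc k) * sqrt (c (s k))" for k
  have ck: "c (s k) \<ge> 0" for k using c_nonneg s_pos[of k] by simp
  have a_nn: "a k \<ge> 0" for k using s_pos[of "Suc k"] ck[of k] by (simp add: a_def)
  have a_sum: "summable a"
  proof (rule summableI_nonneg_bounded[where x=C])
    show "0 \<le> a n" for n by (rule a_nn)
    show "sum a {..<n} \<le> C" for n using bound by (simp add: a_def s_def)
  qed
  have a0: "a \<longlonglongrightarrow> 0" by (rule summable_LIMSEQ_zero[OF a_sum])
  define sc where "sc k = sqrt 2 * sqrt (c (s (Suc k)))" for k
  have sc_nn: "sc k \<ge> 0" for k using ck[of "Suc k"] by (simp add: sc_def)
  define zm where "zm = sqrt (c m / m)"
  define F where "F \<phi> = (\<Sum>k. ennreal (sc k) * indicator {s (Suc k)<..s k} \<phi>) +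
      ennreal zm * indicator {m<..1} \<phi>" for \<phi> :: real
  have pw: "ennreal (sqrt (c \<phi>)) * indicator {0..1} \<phi> \<le> F \<phi>" for \<phi>
  proof (cases "\<phi> \<in> {0..1}")
    case False then show ?thesis by simp
  next
    case True
    show ?thesis
    proof (cases "\<phi> = 0")
      case True then show ?thesis using c0 by simp
    next
      case False
      with True have p: "0 < \<phi>" "\<phi> \<le> 1" by auto
      show ?thesis
      proof (cases "\<phi> \<le> m")
        case True
        obtain n where n: "m / \<phi> < 2 ^ n" using real_arch_pow[of 2 "m / \<phi>"] by auto
        have ex: "\<exists>n. s n < \<phi>" using n p by (intro exI[of _ n]) (simp add: s_def field_simps)
        define n0 where "n0 = (LEAST n. s n < \<phi>)"
        have n0: "s n0 < \<phi>" unfolding n0_def by (rule LeastI_ex[OF ex])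
        have "n0 \<noteq> 0" proof assume "n0 = 0" then show False using n0 True by (simp add: s_def) qed
        then obtain k where k: "n0 = Suc k" by (cases n0) auto
        have "\<not> s k < \<phi>" using not_less_Least[of k "\<lambda>n. s n < \<phi>"] k unfolding n0_def by simp
        then have band: "s (Suc k) < \<phi>" "\<phi> \<le> s k" using n0 k by auto
        have "c \<phi> / \<phi> \<le> c (s (Suc k)) / s (Suc k)" using z_noninc band s_pos by auto
        then have "c \<phi> \<le> \<phi> * (c (s (Suc k)) / s (Suc k))" using p by (simp add: field_simps)
        also have "\<dots> \<le> s k * (c (s (Suc k)) / s (Suc k))"
          using band ck[of "Suc k"] s_pos[of "Suc k"] by (intro mult_right_mono) auto
        also have "\<dots> = 2 * c (s (Suc k))" using s_pos[of k] by (simp add: s_Suc)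
        finally have "sqrt (c \<phi>) \<le> sqrt (2 * c (s (Suc k)))" by simp
        then have le: "sqrt (c \<phi>) \<le> sc k" by (simp add: sc_def real_sqrt_mult)
        have "ennreal (sqrt (c \<phi>)) * indicator {0..1} \<phi> \<le> ennreal (sc k) * indicator {s (Suc k)<..s k} \<phi>"
          using le band p by (simp add: ennreal_leI)
        also have "\<dots> \<le> (\<Sum>k. ennreal (sc k) * indicator {s (Suc k)<..s k} \<phi>)"
        proof -
          let ?F = "\<lambda>k. ennreal (sc k) * indicator {s (Suc k)<..s k} \<phi>"
          have "sum ?F {k} \<le> suminf ?F" by (rule sum_le_suminf) auto
          moreover have "sum ?F {k} = ?F k" by (simp only: sum.insert[OF finite.emptyI] empty_iff not_False_eq_True sum.empty add_0_right)
          ultimately show ?thesis by simp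
        qed
        also have "\<dots> \<le> F \<phi>" by (simp add: F_def)
        finally show ?thesis .
      next
        case False
        have "c \<phi> / \<phi> \<le> c m / m" using z_noninc False m by auto
        then have "c \<phi> \<le> \<phi> * (c m / m)" using p by (simp add: field_simps)
        also have "\<dots> \<le> 1 * (c m / m)"
          using p c_nonneg m by (intro mult_right_mono) auto
        finally have "sqrt (c \<phi>) \<le> zm" by (simp add: zm_def)
        then have "ennreal (sqrt (c \<phi>)) * indicator {0..1} \<phi> \<le> ennreal zm * indicator {m<..1} \<phi>"
          using False p by (simp add: ennreal_leI)
        also have "\<dots> \<le> F \<phi>" by (simp add: F_def)
        finally show ?thesis .
      qed
    qed
  qed
  have "(\<integral>\<^sup>+ \<phi> \<in> {0..1}. ennreal (sqrt (c \<phi>)) \<partial>lborel) \<le> (\<integral>\<^sup>+ \<phi>. F \<phi> \<partial>lborel)"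
    by (rule nn_integral_mono) (use pw in simp)
  also have "\<dots> = (\<Sum>k. \<integral>\<^sup>+ \<phi>. ennreal (sc k) * indicator {s (Suc k)<..s k} \<phi> \<partial>lborel) +
      (\<integral>\<^sup>+ \<phi>. ennreal zm * indicator {m<..1} \<phi> \<partial>lborel)"
    unfolding F_def by (subst nn_integral_add) (auto simp: nn_integral_suminf)
  also have "\<dots> = (\<Sum>k. ennreal (sc k * (s k - s (Suc k)))) + ennreal zm * emeasure lborel {m<..1}"
  proof -
    have "(\<integral>\<^sup>+ \<phi>. ennreal (sc k) * indicator {s (Suc k)<..s k} \<phi> \<partial>lborel) =
        ennreal (sc k * (s k - s (Suc k)))" for k
    proof -
      have le: "s (Suc k) \<le> s k" using s_pos[of k] by (simp add: s_Suc)
      have "(\<integral>\<^sup>+ \<phi>. ennreal (sc k) * indicator {s (Suc k)<..s k} \<phi> \<partial>lborel) =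
          ennreal (sc k) * emeasure lborel {s (Suc k)<..s k}"
        by (rule nn_integral_cmult_indicator) simp
      also have "\<dots> = ennreal (sc k) * ennreal (s k - s (Suc k))" using le by simp
      also have "\<dots> = ennreal (sc k * (s k - s (Suc k)))"
        using le sc_nn[of k] by (simp add: ennreal_mult)
      finally show ?thesis .
    qed
    moreover have "(\<integral>\<^sup>+ \<phi>. ennreal zm * indicator {m<..1} \<phi> \<partial>lborel) = ennreal zm * emeasure lborel {m<..1}"
      by (rule nn_integral_cmult_indicator) simp
    ultimately show ?thesis by simp
  qed
  also have "\<dots> < \<infinity>"
  proof -
    have eq: "sc k * (s k - s (Suc k)) = 2 * sqrt 2 * a (Suc k)" for k
      by (simp add: sc_def a_def s_Suc)
    have "summable (\<lambda>k. 2 * sqrt 2 * a (Suc k))"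
      using summable_ignore_initial_segment[OF a_sum, of 1] by (intro summable_mult) simp
    then have "(\<Sum>k. ennreal (sc k * (s k - s (Suc k)))) \<noteq> \<infinity>"
    proof -
      have "(\<Sum>k. ennreal (2 * sqrt 2 * a (Suc k))) \<noteq> top"
        by (rule ennreal_suminf_neq_top) (use \<open>summable (\<lambda>k. 2 * sqrt 2 * a (Suc k))\<close> a_nn in auto)
      then show ?thesis by (simp add: eq)
    qed
    moreover have "emeasure lborel {m<..1::real} < \<infinity>"
      by (cases "m \<le> 1") auto
    ultimately show ?thesis
      by (simp add: less_top ennreal_mult_less_top)
  qed
  finally have part1: "(\<integral>\<^sup>+ \<phi> \<in> {0..1}. ennreal (sqrt (c \<phi>)) \<partial>lborel) < \<infinity>" .
  define f where "f \<phi> = c \<phi> / \<phi> * \<phi> ^ 3" for \<phi> :: real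
  have fs: "f (s k) = 4 * (a k)^2" for k
    using s_pos[of k] ck[of k] by (simp add: f_def a_def s_Suc power2_eq_square power3_eq_cube field_simps)
  have flim: "(\<lambda>k. f (s k)) \<longlonglongrightarrow> 0"
    unfolding fs using tendsto_mult[OF tendsto_const tendsto_power[OF a0, of 2], of 4] by simp
  have slim: "filterlim s (at_right 0) sequentially"
  proof (rule tendsto_imp_filterlim_at_right)
    show "s \<longlonglongrightarrow> 0" unfolding s_def[abs_def] by (rule LIMSEQ_divide_realpow_zero) simp
    show "\<forall>\<^sub>F k in sequentially. 0 < s k" using s_pos by simp
  qed
  have ge: "0 \<le> Liminf (at_right 0) (\<lambda>\<phi>. ereal (f \<phi>))"
  proof (rule Liminf_bounded)
    show "\<forall>\<^sub>F \<phi> in at_right 0. 0 \<le> ereal (f \<phi>)"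
    proof -
      have "\<forall>\<^sub>F \<phi> in at_right (0::real). \<phi> \<in> {0<..<1}" by (rule eventually_at_right_real) simp
      then show ?thesis by eventually_elim (use c_nonneg in \<open>auto simp: f_def\<close>)
    qed
  qed
  have le: "Liminf (at_right 0) (\<lambda>\<phi>. ereal (f \<phi>)) \<le> 0"
  proof (rule ccontr)
    assume "\<not> ?thesis"
    then have "0 < Liminf (at_right 0) (\<lambda>\<phi>. ereal (f \<phi>))" by simp
    then obtain y where y: "0 < y" "y < Liminf (at_right 0) (\<lambda>\<phi>. ereal (f \<phi>))"
      using dense by blast
    have "\<forall>\<^sub>F \<phi> in at_right 0. y < ereal (f \<phi>)"
      using y(2) le_Liminf_iff[of "Liminf (at_right 0) (\<lambda>\<phi>. ereal (f \<phi>))" "at_right 0" "\<lambda>\<phi>. ereal (f \<phi>)"]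
      by auto
    then have e1: "\<forall>\<^sub>F k in sequentially. y < ereal (f (s k))"
      using slim unfolding filterlim_iff by blast
    have tl: "(\<lambda>k. ereal (f (s k))) \<longlonglongrightarrow> ereal 0" by (intro tendsto_ereal flim)
    have y0: "ereal 0 < y" using y(1) by (simp add: zero_ereal_def)
    have e2: "\<forall>\<^sub>F k in sequentially. ereal (f (s k)) < y" by (rule order_tendstoD(2)[OF tl y0])
    have "\<forall>\<^sub>F k in sequentially. False" using e1 e2 by eventually_elim auto
    then show False by simp
  qed
  have "Liminf (at_right 0) (\<lambda>\<phi>. ereal (c \<phi> / \<phi> * \<phi> ^ 3)) = 0"
    using ge le unfolding f_def by simp
  with part1 show ?thesis by blast
qed

theorem mainTheorem7:
  fixes c \<tau> :: "real \<Rightarrow> real"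
  assumes c_nonneg: "\<forall>x\<ge>0. c x \<ge> 0"
    and c0: "c 0 = 0"
    and z_noninc: "\<forall>x y. 0 < x \<longrightarrow> x \<le> y \<longrightarrow> c y / y \<le> c x / x"
    and induced: "\<forall>w\<ge>0. induced_cost c w = ennreal (\<tau> w)"
    and adm: "admissible_cost \<tau>"
  shows "(\<integral>\<^sup>+ \<phi> \<in> {0..1}. ennreal (sqrt (c \<phi>)) \<partial>lborel) < \<infinity> \<and>
         Liminf (at_right 0) (\<lambda>\<phi>. ereal (c \<phi> / \<phi> * \<phi> ^ 3)) = 0"
proof -
  have "induced_cost c 1 = ennreal (\<tau> 1)" using induced by simp
  then have "induced_cost c 1 < \<infinity>" by simp
  then obtain \<psi> where psi: "integrable lborel \<psi>" "(\<integral>y. \<psi> y \<partial>lborel) = 1" and en: "energy c \<psi> < \<infinity>"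
    unfolding induced_cost_def by (auto simp: INF_less_iff)
  have ex: "\<exists>g. weak_deriv \<psi> g"
  proof (rule ccontr)
    assume "\<not> (\<exists>g. weak_deriv \<psi> g)"
    then have "energy c \<psi> = \<infinity>" by (simp add: energy_def)
    then show False using en by simp
  qed
  define g where "g = (SOME g. weak_deriv \<psi> g)"
  have wd: "weak_deriv \<psi> g" unfolding g_def by (rule someI_ex[OF ex])
  have Efin: "(\<integral>\<^sup>+ y. ennreal (1/2 * g y ^ 2 + c \<bar>\<psi> y\<bar>) \<partial>lborel) < \<infinity>"
    using en ex unfolding energy_def g_def by simp
  define EE where "EE = enn2real (\<integral>\<^sup>+ y. ennreal (1/2 * g y ^ 2 + c \<bar>\<psi> y\<bar>) \<partial>lborel)"
  have E: "(\<integral>\<^sup>+ y. ennreal (1/2 * g y ^ 2 + c \<bar>\<psi> y\<bar>) \<partial>lborel) = ennreal EE"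
    using Efin unfolding EE_def by (simp add: less_top)
  have EE: "EE \<ge> 0" unfolding EE_def by simp
  obtain m where m: "m > 0" "\<forall>N0. (\<Sum>k<N0. m / 2^(Suc k) * sqrt (c (m / 2^k))) \<le> EE"
    using band_core[OF c_nonneg z_noninc psi wd E EE] by blast
  show ?thesis by (rule c_final[OF c_nonneg c0 z_noninc m(1) m(2)])
qed

end
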